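(* Let $\mathsf{X}$ be a metric space and $\preceq$ a closed, down-compact partial order on it. Then for all sequences $(x^-_n)$, $(x_n)$, $(x^+_n)$ in $\mathsf{X}$ and $x_\infty\in\mathsf{X}$: if $x^-_n\preceq x_n\preceq x^+_n$ for all $n$, $x^-_n\to x_\infty$ and $x^+_n\to x_\infty$, then $x_n\to x_\infty$.
   Context: A partial order $\preceq$ on a metric space $\mathsf{X}$ is closed if its graph $\{(x,y):x\preceq y\}$ is closed in $\mathsf{X}\times\mathsf{X}$, and down-compact if for every compact $K^+\subset\mathsf{X}$ the set $\{x\in\mathsf{X}:\exists x^+\in K^+,\ x\preceq x^+\}$ is compact. *)

theory Defs
  imports "HOL-Analysis.Analysis"
begin

definition partial_order_rel :: "('a \<Rightarrow> 'a \<Rightarrow> bool) \<Rightarrow> bool" where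
  "partial_order_rel le \<longleftrightarrow>
     (\<forall>x. le x x) \<and> (\<forall>x y. le x y \<and> le y x \<longrightarrow> x = y) \<and>
     (\<forall>x y z. le x y \<and> le y z \<longrightarrow> le x z)"

definition closed_order :: "('a::topological_space \<Rightarrow> 'a \<Rightarrow> bool) \<Rightarrow> bool" where
  "closed_order le \<longleftrightarrow> closed {(x, y). le x y}"

definition down_compact :: "('a::topological_space \<Rightarrow> 'a \<Rightarrow> bool) \<Rightarrow> bool" where
  "down_compact le \<longleftrightarrow>
     (\<forall>K. compact K \<longrightarrow> compact {x. \<exists>xp\<in>K. le x xp})"

end

theory Submission
  imports Defs
begin

theorem lemma3p14:
  fixes le :: "'a::metric_space \<Rightarrow> 'a \<Rightarrow> bool"
    and xm x xp :: "nat \<Rightarrow> 'a" and xinf :: 'a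
  assumes "partial_order_rel le" and "closed_order le" and "down_compact le"
    and "\<And>n. le (xm n) (x n)" and "\<And>n. le (x n) (xp n)"
    and "xm \<longlonglongrightarrow> xinf" and "xp \<longlonglongrightarrow> xinf"
  shows "x \<longlonglongrightarrow> xinf"
proof (rule ccontr)
  assume nc: "\<not> x \<longlonglongrightarrow> xinf"
  define D where "D = {z. \<exists>w\<in>insert xinf (range xp). le z w}"
  have cK: "compact (insert xinf (range xp))"
    using compactin_sequence_with_limit[of euclidean xp xinf "range xp"] assms(7)
    by (simp add: limitin_canonical_iff)
  have cD: "compact D" unfolding D_def
    using assms(3) cK unfolding down_compact_def by blast
  have xD: "x n \<in> D" for n unfolding D_def using assms(5) by blast
  have G: "closed {(a, b). le a b}" using assms(2) unfolding closed_order_def by simp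
  from nc obtain e where e: "e > 0" "\<forall>N. \<exists>n\<ge>N. \<not> dist (x n) xinf < e"
    unfolding LIMSEQ_def by blast
  have inf: "infinite {n. \<not> dist (x n) xinf < e}"
    using e(2) unfolding infinite_nat_iff_unbounded_le by blast
  obtain r :: "nat \<Rightarrow> nat" where r: "strict_mono r" "\<And>n. r n \<in> {n. \<not> dist (x n) xinf < e}"
    using infinite_enumerate[OF inf] by blast
  have "\<forall>n. (x \<circ> r) n \<in> D" using xD by simp
  then obtain y s where ys: "y \<in> D" "strict_mono s" "((x \<circ> r) \<circ> s) \<longlonglongrightarrow> y"
    using compact_imp_seq_compact[OF cD] unfolding seq_compact_def by blast
  define t where "t = r \<circ> s"
  have t: "strict_mono t" using r(1) ys(2) unfolding t_def by (simp add: strict_mono_o)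
  have xt: "(\<lambda>n. x (t n)) \<longlonglongrightarrow> y" using ys(3) unfolding t_def by (simp add: comp_def)
  have mt: "(\<lambda>n. xm (t n)) \<longlonglongrightarrow> xinf" using LIMSEQ_subseq_LIMSEQ[OF assms(6) t] by (simp add: comp_def)
  have pt: "(\<lambda>n. xp (t n)) \<longlonglongrightarrow> xinf" using LIMSEQ_subseq_LIMSEQ[OF assms(7) t] by (simp add: comp_def)
  have "(\<lambda>n. (xm (t n), x (t n))) \<longlonglongrightarrow> (xinf, y)" using mt xt by (rule tendsto_Pair)
  hence l1: "le xinf y" using closed_sequentially[OF G, of "\<lambda>n. (xm (t n), x (t n))"] assms(4) by auto
  have "(\<lambda>n. (x (t n), xp (t n))) \<longlonglongrightarrow> (y, xinf)" using xt pt by (rule tendsto_Pair)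
  hence l2: "le y xinf" using closed_sequentially[OF G, of "\<lambda>n. (x (t n), xp (t n))"] assms(5) by auto
  have "y = xinf" using assms(1) l1 l2 unfolding partial_order_rel_def by blast
  with xt obtain N where "\<forall>n\<ge>N. dist (x (t n)) xinf < e" using e(1) unfolding LIMSEQ_def by blast
  moreover have "\<not> dist (x (t N)) xinf < e" using r(2) unfolding t_def by simp
  ultimately show False by auto
qed

end
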